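(* Let $K\subseteq\mathbb{R}^d$ be nonempty, closed and convex with $B(0,1)\subseteq K\subseteq B(0,R)$ for some $R>1$, and let $\pi$ be uniform on $K$. Run the ASF for the uniform distribution on $K$ with step size $\eta=1/d^2$ from an $M$-warm initial distribution $\mu_0$, implementing step (2) for $y=y_k$ by the following rejection sampler: choose any $\hat x=\hat x(y)\in K$ with $\frac{1}{2\eta}\|\hat x-y\|^2-\min_{x\in K}\frac{1}{2\eta}\|x-y\|^2\le\frac1d$; then repeat {draw $X$ from the density $\nu(x)\propto\exp(-\mathcal{P}_2(x))$ and independent $U\sim\mathcal{U}[0,1]$; accept $X$ if $U\le\exp(-\Theta^{\eta,K}_y(X))/\exp(-\mathcal{P}_2(X))$}. Then, for every iteration $k$, the expected number of trials $\mathbb{E}[n_{y_k}]$, with $n_y=\frac{\int_{\mathbb{R}^d}\exp(-\mathcal{P}_2(x))dx}{\int_K\exp(-\frac{1}{2\eta}\|x-y\|^2)dx}$ and expectation over the law of $y_k$, satisfies $$\mathbb{E}[n_{y_k}]\le\sqrt{2\pi}\,M\exp\Bigl(\frac{13}{4}+\frac{20}{d}\Bigr)+M\exp\Bigl(\frac94+\frac{12}{d}\Bigr).$$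
   Context: ASF with step size $\eta$: given $x_k$, (1) sample $y_k\sim\mathcal{N}(x_k,\eta I_d)$; (2) sample $x_{k+1}$ from the density proportional to $\exp(-\|x-y_k\|^2/(2\eta))\mathbf{1}_K(x)$. $M$-warm: $\mu_0\ll\pi$ and $d\mu_0/d\pi\le M$. $I_K=0$ on $K$, $+\infty$ off $K$; $\Theta^{\eta,K}_y(x)=I_K(x)+\frac{1}{2\eta}\|x-y\|^2$; $\mathcal{P}_2(x)=\frac{1}{2\eta}\Bigl(\|x-\hat x\|^2+\|\hat x-y\|^2-2\sqrt{\tfrac{2\eta}{d}}\bigl(\|x-\hat x\|+\|\hat x-y\|\bigr)-\tfrac{12\eta}{d}\Bigr)$. *)

theory Defs
  imports "HOL-Probability.Probability"
begin

definition gauss_kernel :: "real \<Rightarrow> 'a::euclidean_space \<Rightarrow> 'a measure" where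
  "gauss_kernel \<eta> x = density lborel
     (\<lambda>y. ennreal ((2 * pi * \<eta>) powr (- real DIM('a) / 2) * exp (- (norm (y - x))\<^sup>2 / (2 * \<eta>))))"

definition restricted_gauss :: "real \<Rightarrow> 'a::euclidean_space set \<Rightarrow> 'a \<Rightarrow> 'a measure" where
  "restricted_gauss \<eta> K y = density lborel
     (\<lambda>x. indicator K x * ennreal (exp (- (norm (x - y))\<^sup>2 / (2 * \<eta>)))
          / (\<integral>\<^sup>+ z. indicator K z * ennreal (exp (- (norm (z - y))\<^sup>2 / (2 * \<eta>))) \<partial>lborel))"

primrec asf_x_law :: "real \<Rightarrow> 'a::euclidean_space set \<Rightarrow> 'a measure \<Rightarrow> nat \<Rightarrow> 'a measure" where
  "asf_x_law \<eta> K \<mu>0 0 = \<mu>0"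
| "asf_x_law \<eta> K \<mu>0 (Suc k) =
     bind (bind (asf_x_law \<eta> K \<mu>0 k) (gauss_kernel \<eta>)) (restricted_gauss \<eta> K)"

definition asf_y_law :: "real \<Rightarrow> 'a::euclidean_space set \<Rightarrow> 'a measure \<Rightarrow> nat \<Rightarrow> 'a measure" where
  "asf_y_law \<eta> K \<mu>0 k = bind (asf_x_law \<eta> K \<mu>0 k) (gauss_kernel \<eta>)"

definition warm :: "real \<Rightarrow> 'a measure \<Rightarrow> 'a measure \<Rightarrow> bool" where
  "warm M \<mu>0 \<pi> \<longleftrightarrow> sets \<mu>0 = sets \<pi> \<and> absolutely_continuous \<pi> \<mu>0 \<and>
     (AE x in \<pi>. RN_deriv \<pi> \<mu>0 x \<le> ennreal M)"

definition P2 :: "real \<Rightarrow> real \<Rightarrow> 'a::real_normed_vector \<Rightarrow> 'a \<Rightarrow> 'a \<Rightarrow> real" where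
  "P2 \<eta> d xh y x = (1 / (2 * \<eta>)) *
     ((norm (x - xh))\<^sup>2 + (norm (xh - y))\<^sup>2
      - 2 * sqrt (2 * \<eta> / d) * (norm (x - xh) + norm (xh - y)) - 12 * \<eta> / d)"

definition n_trials :: "real \<Rightarrow> 'a::euclidean_space set \<Rightarrow> 'a \<Rightarrow> 'a \<Rightarrow> ennreal" where
  "n_trials \<eta> K xh y =
     (\<integral>\<^sup>+ x. ennreal (exp (- P2 \<eta> (real DIM('a)) xh y x)) \<partial>lborel)
     / (\<integral>\<^sup>+ x. indicator K x * ennreal (exp (- (norm (x - y))\<^sup>2 / (2 * \<eta>))) \<partial>lborel)"

end

theory Submission imports Defs begin

lemma gauss1:
  assumes s: "s > 0"
  shows "(\<integral>\<^sup>+t. ennreal (exp (- (t - m)\<^sup>2 / s)) \<partial>lborel) = ennreal (sqrt (pi * s))"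
proof -
  define \<sigma> where "\<sigma> = sqrt (s/2)"
  have \<sigma>: "\<sigma> > 0" "2 * \<sigma>\<^sup>2 = s" using s by (auto simp: \<sigma>_def)
  have r: "sqrt 2 * \<sigma> = sqrt s" using s by (simp add: \<sigma>_def real_sqrt_mult[symmetric])
  have eq: "exp (- (t - m)\<^sup>2 / s) = sqrt (pi * s) * normal_density m \<sigma> t" for t
    using \<sigma> s r by (simp add: normal_density_def real_sqrt_mult)
  have "(\<integral>\<^sup>+t. ennreal (normal_density m \<sigma> t) \<partial>lborel) = 1"
    using \<sigma> by (subst nn_integral_eq_integral) auto
  moreover have "(\<integral>\<^sup>+t. ennreal (exp (- (t - m)\<^sup>2 / s)) \<partial>lborel)
     = (\<integral>\<^sup>+t. ennreal (sqrt (pi * s)) * ennreal (normal_density m \<sigma> t) \<partial>lborel)"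
    using s by (intro nn_integral_cong) (subst eq, rule ennreal_mult, auto)
  ultimately show ?thesis
    by (simp add: nn_integral_cmult)
qed

lemma gaussD:
  fixes p :: "'a::euclidean_space"
  assumes s: "s > 0"
  shows "(\<integral>\<^sup>+x. ennreal (exp (- (norm (x - p))\<^sup>2 / s)) \<partial>lborel) = ennreal ((pi * s) powr (real DIM('a) / 2))"
proof -
  have eq: "exp (- (norm (x - p))\<^sup>2 / s) = (\<Prod>b\<in>Basis. exp (- (x \<bullet> b - p \<bullet> b)\<^sup>2 / s))" for x
  proof -
    have "(norm (x - p))\<^sup>2 = inner (x-p) (x-p)" by (simp add: power2_norm_eq_inner)
    also have "\<dots> = (\<Sum>b\<in>Basis. inner (x-p) b * inner (x-p) b)" by (rule euclidean_inner)
    finally have "(norm (x - p))\<^sup>2 = (\<Sum>b\<in>Basis. (x \<bullet> b - p \<bullet> b)\<^sup>2)"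
      by (simp add: power2_eq_square inner_diff_left)
    then show ?thesis
      by (simp add: exp_sum[symmetric] sum_divide_distrib[symmetric] sum_negf)
  qed
  have "(\<integral>\<^sup>+x. ennreal (exp (- (norm (x - p))\<^sup>2 / s)) \<partial>lborel)
      = (\<integral>\<^sup>+x. ennreal (\<Prod>b\<in>Basis. (\<lambda>b t. exp (- (t - p \<bullet> b)\<^sup>2 / s)) b (x \<bullet> b)) \<partial>lborel)"
    by (rule nn_integral_cong, rule arg_cong[where f=ennreal], rule eq)
  also have "\<dots> = (\<Prod>b\<in>Basis. (\<integral>\<^sup>+t. ennreal (exp (- (t - p \<bullet> b)\<^sup>2 / s)) \<partial>lborel))"
    using nn_integral_lborel_prod[of "\<lambda>b t. exp (- (t - p \<bullet> b)\<^sup>2 / s)"] by (simp add: prod_ennreal)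
  also have "\<dots> = (\<Prod>b\<in>(Basis::'a set). ennreal (sqrt (pi * s)))"
    using s by (simp add: gauss1[OF s, simplified])
  also have "\<dots> = ennreal (sqrt (pi * s) ^ DIM('a))"
    using s by (simp add: ennreal_power)
  also have "sqrt (pi * s) ^ DIM('a) = (pi * s) powr (real DIM('a) / 2)"
  proof -
    have "pi * s > 0" using s by simp
    then have "sqrt (pi * s) = (pi * s) powr (1/2)" by (simp add: powr_half_sqrt)
    then have "sqrt (pi * s) ^ DIM('a) = (pi * s) powr (real DIM('a) * (1/2))"
      using \<open>pi * s > 0\<close> by (simp only: powr_power)
    then show ?thesis by simp
  qed
  finally show ?thesis .
qed

lemma gaussD':
  fixes p :: "'a::euclidean_space"
  assumes s: "s > 0"
  shows "(\<integral>\<^sup>+x. ennreal (exp (- (norm (p - x))\<^sup>2 / s)) \<partial>lborel) = ennreal ((pi * s) powr (real DIM('a) / 2))"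
  using gaussD[OF s, of p] by (simp add: norm_minus_commute)

lemma gk_prob:
  fixes x :: "'a::euclidean_space"
  assumes "\<eta> > 0"
  shows "prob_space (gauss_kernel \<eta> x)"
proof
  have "emeasure (gauss_kernel \<eta> x) (space (gauss_kernel \<eta> x))
     = (\<integral>\<^sup>+y. ennreal ((2 * pi * \<eta>) powr (- real DIM('a) / 2)) * ennreal (exp (- (norm (y - x))\<^sup>2 / (2 * \<eta>))) \<partial>lborel)"
    unfolding gauss_kernel_def using assms
    by (subst emeasure_density) (auto intro!: nn_integral_cong simp: ennreal_mult)
  also have "\<dots> = ennreal ((2 * pi * \<eta>) powr (- real DIM('a) / 2)) * ennreal ((pi * (2 * \<eta>)) powr (real DIM('a) / 2))"
    using assms by (simp add: nn_integral_cmult gaussD[simplified])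
  also have "\<dots> = 1"
  proof -
    have p: "pi * (2 * \<eta>) = 2 * pi * \<eta>" by simp
    have "(2 * pi * \<eta>) powr (- real DIM('a) / 2) * (2 * pi * \<eta>) powr (real DIM('a) / 2) = 1"
      using assms by (simp add: powr_add[symmetric])
    moreover have "ennreal ((2 * pi * \<eta>) powr (- real DIM('a) / 2)) * ennreal ((2 * pi * \<eta>) powr (real DIM('a) / 2))
       = ennreal ((2 * pi * \<eta>) powr (- real DIM('a) / 2) * (2 * pi * \<eta>) powr (real DIM('a) / 2))"
      by (rule ennreal_mult''[symmetric]) simp
    ultimately show ?thesis by (simp only: p) simp
  qed
  finally show "emeasure (gauss_kernel \<eta> x) (space (gauss_kernel \<eta> x)) = 1" .
qed

lemma sets_gk[simp]: "sets (gauss_kernel \<eta> x) = sets borel"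
  by (simp add: gauss_kernel_def)

lemma gk_meas:
  assumes "\<eta> > 0"
  shows "gauss_kernel \<eta> \<in> (borel :: 'a::euclidean_space measure) \<rightarrow>\<^sub>M subprob_algebra borel"
proof (rule measurable_subprob_algebra)
  fix a :: 'a show "subprob_space (gauss_kernel \<eta> a)"
    using gk_prob[OF assms] by (rule prob_space_imp_subprob_space)
  show "sets (gauss_kernel \<eta> a) = sets borel" by simp
next
  fix A :: "'a set" assume A: "A \<in> sets borel"
  have "(\<lambda>a. emeasure (gauss_kernel \<eta> a) A) = (\<lambda>a. \<integral>\<^sup>+y. ennreal ((2 * pi * \<eta>) powr (- real DIM('a) / 2) * exp (- (norm (y - a))\<^sup>2 / (2 * \<eta>))) * indicator A y \<partial>lborel)"
    using A unfolding gauss_kernel_def by (intro ext, subst emeasure_density) auto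
  also have "\<dots> \<in> borel_measurable borel"
    using A by measurable
  finally show "(\<lambda>a. emeasure (gauss_kernel \<eta> a) A) \<in> borel_measurable borel" .
qed

definition Dn :: "real \<Rightarrow> 'a::euclidean_space set \<Rightarrow> 'a \<Rightarrow> ennreal" where
  "Dn \<eta> K y = (\<integral>\<^sup>+ z. indicator K z * ennreal (exp (- (norm (z - y))\<^sup>2 / (2 * \<eta>))) \<partial>lborel)"

lemma Dn_meas[measurable]:
  assumes [measurable]: "K \<in> sets borel"
  shows "Dn \<eta> K \<in> borel_measurable borel"
  unfolding Dn_def by measurable

lemma Dn_fin:
  assumes "\<eta> > 0"
  shows "Dn \<eta> K y < top"
proof -
  have "Dn \<eta> K y \<le> (\<integral>\<^sup>+ z. ennreal (exp (- (norm (z - y))\<^sup>2 / (2 * \<eta>))) \<partial>lborel)"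
    unfolding Dn_def by (intro nn_integral_mono) (auto split: split_indicator)
  also have "\<dots> < top" using assms by (simp add: gaussD[simplified])
  finally show ?thesis .
qed

lemma Dn_pos:
  assumes "\<eta> > 0" "ball 0 1 \<subseteq> K"
  shows "Dn \<eta> K y > 0"
proof -
  define c where "c = exp (- (1 + norm y)\<^sup>2 / (2 * \<eta>))"
  have c: "c > 0" by (simp add: c_def)
  have "ennreal c * emeasure lborel (ball (0::'a) 1) = (\<integral>\<^sup>+ z. ennreal c * indicator (ball (0::'a) 1) z \<partial>lborel)"
    by (simp add: nn_integral_cmult_indicator)
  also have "\<dots> \<le> Dn \<eta> K y"
    unfolding Dn_def
  proof (intro nn_integral_mono)
    fix z :: 'a
    show "ennreal c * indicator (ball 0 1) z \<le> indicator K z * ennreal (exp (- (norm (z - y))\<^sup>2 / (2 * \<eta>)))"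
    proof (cases "z \<in> ball 0 1")
      case True
      then have zK: "z \<in> K" using assms by auto
      have "norm (z - y) \<le> 1 + norm y" using True norm_triangle_ineq4[of z y] by auto
      then have "(norm (z - y))\<^sup>2 \<le> (1 + norm y)\<^sup>2" by (intro power_mono) auto
      then have "c \<le> exp (- (norm (z - y))\<^sup>2 / (2 * \<eta>))"
        unfolding c_def using assms by (simp add: divide_right_mono)
      then show ?thesis using True zK by (simp add: ennreal_leI)
    qed simp
  qed
  finally have le: "ennreal c * emeasure lborel (ball (0::'a) 1) \<le> Dn \<eta> K y" .
  have "measure lborel (ball (0::'a) 1) > 0" using content_ball_pos[of 1 0] by simp
  then have "emeasure lborel (ball (0::'a) 1) > 0"
    using emeasure_lborel_ball_finite[of "0::'a" 1] by (simp add: emeasure_eq_ennreal_measure)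
  then have "ennreal c * emeasure lborel (ball (0::'a) 1) > 0" using c by (simp add: ennreal_zero_less_mult_iff)
  then show ?thesis using le by order
qed

lemma sets_rg[simp]: "sets (restricted_gauss \<eta> K y) = sets borel"
  by (simp add: restricted_gauss_def)

lemma rg_eq: "restricted_gauss \<eta> K y = density lborel (\<lambda>x. indicator K x * ennreal (exp (- (norm (x - y))\<^sup>2 / (2 * \<eta>))) / Dn \<eta> K y)"
  by (simp add: restricted_gauss_def Dn_def)

lemma rg_prob:
  assumes "\<eta> > 0" "ball 0 1 \<subseteq> K" "K \<in> sets borel"
  shows "prob_space (restricted_gauss \<eta> K y)"
proof
  have "emeasure (restricted_gauss \<eta> K y) (space (restricted_gauss \<eta> K y))
     = (\<integral>\<^sup>+x. indicator K x * ennreal (exp (- (norm (x - y))\<^sup>2 / (2 * \<eta>))) / Dn \<eta> K y \<partial>lborel)"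
    unfolding rg_eq using assms by (subst emeasure_density) auto
  also have "\<dots> = Dn \<eta> K y / Dn \<eta> K y"
    using assms by (subst nn_integral_divide) (auto simp: Dn_def)
  also have "\<dots> = 1" using Dn_pos[OF assms(1,2), of y] Dn_fin[OF assms(1), of K y]
    by (intro ennreal_divide_self) auto
  finally show "emeasure (restricted_gauss \<eta> K y) (space (restricted_gauss \<eta> K y)) = 1" .
qed

lemma rg_meas:
  assumes "\<eta> > 0" "ball 0 1 \<subseteq> K" and [measurable]: "K \<in> sets borel"
  shows "restricted_gauss \<eta> K \<in> (borel :: 'a::euclidean_space measure) \<rightarrow>\<^sub>M subprob_algebra borel"
proof (rule measurable_subprob_algebra)
  fix a :: 'a show "subprob_space (restricted_gauss \<eta> K a)"
    using rg_prob[OF assms] by (rule prob_space_imp_subprob_space)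
  show "sets (restricted_gauss \<eta> K a) = sets borel" by simp
next
  fix A :: "'a set" assume A[measurable]: "A \<in> sets borel"
  have "(\<lambda>a. emeasure (restricted_gauss \<eta> K a) A) = (\<lambda>a. \<integral>\<^sup>+x. indicator K x * ennreal (exp (- (norm (x - a))\<^sup>2 / (2 * \<eta>))) / Dn \<eta> K a * indicator A x \<partial>lborel)"
    unfolding rg_eq by (intro ext, subst emeasure_density) auto
  also have "\<dots> \<in> borel_measurable borel"
    by measurable
  finally show "(\<lambda>a. emeasure (restricted_gauss \<eta> K a) A) \<in> borel_measurable borel" .
qed

lemma core:
  fixes K :: "'a::euclidean_space set"
  assumes \<eta>: "\<eta> > 0" and B: "ball 0 1 \<subseteq> K" and [measurable]: "K \<in> sets borel"
    and h[measurable]: "h \<in> borel_measurable borel"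
  shows "(\<integral>\<^sup>+x. indicator K x * (\<integral>\<^sup>+y. (\<integral>\<^sup>+z. h z \<partial>restricted_gauss \<eta> K y) \<partial>gauss_kernel \<eta> x) \<partial>lborel)
       = (\<integral>\<^sup>+x. indicator K x * h x \<partial>lborel)"
proof -
  define C0 where "C0 = (2 * pi * \<eta>) powr (- real DIM('a) / 2)"
  define ee where "ee = (\<lambda>x y::'a. exp (- (norm (x - y))\<^sup>2 / (2 * \<eta>)))"
  have ee_sym: "ee x y = ee y x" for x y by (simp add: ee_def norm_minus_commute)
  have ee_m[measurable (raw)]: "(\<lambda>w. ee (f w) (g w)) \<in> borel_measurable M"
    if [measurable]: "f \<in> M \<rightarrow>\<^sub>M borel" "g \<in> M \<rightarrow>\<^sub>M borel" for f g :: "'b \<Rightarrow> 'a" and M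
    unfolding ee_def by measurable
  have C0: "C0 \<ge> 0" by (simp add: C0_def)
  have gint: "ennreal C0 * (\<integral>\<^sup>+y. ennreal (ee z y) \<partial>lborel) = 1" for z
  proof -
    have "(\<integral>\<^sup>+y. ennreal (ee z y) \<partial>lborel) = ennreal ((pi * (2 * \<eta>)) powr (real DIM('a) / 2))"
      unfolding ee_def using gaussD'[of "2*\<eta>" z] \<eta> by simp
    moreover have "C0 * (pi * (2 * \<eta>)) powr (real DIM('a) / 2) = 1"
      unfolding C0_def using \<eta> by (simp add: powr_add[symmetric] mult.assoc mult.left_commute)
    ultimately show ?thesis using C0 by (simp add: ennreal_mult''[symmetric])
  qed
  define Hr where "Hr = (\<lambda>y. (\<integral>\<^sup>+z. indicator K z * ennreal (ee z y) * h z \<partial>lborel) / Dn \<eta> K y)"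
  have [measurable]: "Hr \<in> borel_measurable borel" unfolding Hr_def by measurable
  have Hr: "(\<integral>\<^sup>+z. h z \<partial>restricted_gauss \<eta> K y) = Hr y" for y
  proof -
    have "(\<integral>\<^sup>+z. h z \<partial>restricted_gauss \<eta> K y) = (\<integral>\<^sup>+z. indicator K z * ennreal (ee z y) / Dn \<eta> K y * h z \<partial>lborel)"
      unfolding rg_eq ee_def by (subst nn_integral_density) auto
    also have "\<dots> = (\<integral>\<^sup>+z. indicator K z * ennreal (ee z y) * h z / Dn \<eta> K y \<partial>lborel)"
      by (intro nn_integral_cong) (simp add: ennreal_divide_times ennreal_times_divide mult.commute)
    also have "\<dots> = Hr y" unfolding Hr_def by (subst nn_integral_divide) auto
    finally show ?thesis .
  qed
  have HrD: "Hr y * Dn \<eta> K y = (\<integral>\<^sup>+z. indicator K z * ennreal (ee z y) * h z \<partial>lborel)" for y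
    unfolding Hr_def using Dn_pos[OF \<eta> B, of y] Dn_fin[OF \<eta>, of K y]
    by (simp add: ennreal_divide_times)
  have G: "(\<integral>\<^sup>+y. F y \<partial>gauss_kernel \<eta> x) = (\<integral>\<^sup>+y. ennreal C0 * ennreal (ee y x) * F y \<partial>lborel)"
    if [measurable]: "F \<in> borel_measurable borel" for F x
    unfolding gauss_kernel_def C0_def ee_def
    by (subst nn_integral_density) (auto intro!: nn_integral_cong simp: ennreal_mult)
  have "(\<integral>\<^sup>+x. indicator K x * (\<integral>\<^sup>+y. (\<integral>\<^sup>+z. h z \<partial>restricted_gauss \<eta> K y) \<partial>gauss_kernel \<eta> x) \<partial>lborel)
      = (\<integral>\<^sup>+x. (\<integral>\<^sup>+y. indicator K x * (ennreal C0 * ennreal (ee y x) * Hr y) \<partial>lborel) \<partial>lborel)"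
    by (intro nn_integral_cong) (simp add: Hr G nn_integral_cmult)
  also have "\<dots> = (\<integral>\<^sup>+y. (\<integral>\<^sup>+x. (ennreal C0 * Hr y) * (indicator K x * ennreal (ee x y)) \<partial>lborel) \<partial>lborel)"
    by (subst lborel_pair.Fubini'[symmetric]) (auto intro!: nn_integral_cong simp: ee_sym ac_simps)
  also have "\<dots> = (\<integral>\<^sup>+y. ennreal C0 * (Hr y * Dn \<eta> K y) \<partial>lborel)"
    by (intro nn_integral_cong) (simp add: nn_integral_cmult Dn_def ee_def mult.assoc)
  also have "\<dots> = (\<integral>\<^sup>+y. (\<integral>\<^sup>+z. (ennreal C0 * ennreal (ee z y)) * (indicator K z * h z) \<partial>lborel) \<partial>lborel)"
    by (intro nn_integral_cong) (simp add: HrD nn_integral_cmult[symmetric] ac_simps)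
  also have "\<dots> = (\<integral>\<^sup>+z. (\<integral>\<^sup>+y. (indicator K z * h z) * (ennreal C0 * ennreal (ee z y)) \<partial>lborel) \<partial>lborel)"
    by (subst lborel_pair.Fubini') (auto intro!: nn_integral_cong simp: ac_simps)
  also have "\<dots> = (\<integral>\<^sup>+z. (indicator K z * h z) * (ennreal C0 * (\<integral>\<^sup>+y. ennreal (ee z y) \<partial>lborel)) \<partial>lborel)"
    by (intro nn_integral_cong) (simp add: nn_integral_cmult)
  also have "\<dots> = (\<integral>\<^sup>+x. indicator K x * h x \<partial>lborel)"
    by (simp add: gint)
  finally show ?thesis .
qed

lemma x_bound:
  fixes K :: "'a::euclidean_space set"
  assumes \<eta>: "\<eta> > 0" and B: "ball 0 1 \<subseteq> K" and Kb[measurable]: "K \<in> sets borel"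
    and V0: "emeasure lborel K \<noteq> 0" and Vt: "emeasure lborel K \<noteq> \<infinity>"
    and W: "warm M \<mu>0 (uniform_measure lborel K)"
  shows "sets (asf_x_law \<eta> K \<mu>0 k) = sets borel \<and>
    (\<forall>h. h \<in> borel_measurable borel \<longrightarrow>
      (\<integral>\<^sup>+x. h x \<partial>asf_x_law \<eta> K \<mu>0 k) \<le> ennreal M / emeasure lborel K * (\<integral>\<^sup>+x. indicator K x * h x \<partial>lborel))"
proof (induction k)
  case 0
  let ?\<pi> = "uniform_measure lborel K"
  interpret P: prob_space ?\<pi> using V0 Vt by (rule prob_space_uniform_measure)
  have s: "sets \<mu>0 = sets ?\<pi>" and ac: "absolutely_continuous ?\<pi> \<mu>0"
    and ae: "AE x in ?\<pi>. RN_deriv ?\<pi> \<mu>0 x \<le> ennreal M"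
    using W unfolding warm_def by auto
  have "sets \<mu>0 = sets borel" using s by simp
  moreover have "(\<integral>\<^sup>+x. h x \<partial>\<mu>0) \<le> ennreal M / emeasure lborel K * (\<integral>\<^sup>+x. indicator K x * h x \<partial>lborel)"
    if h[measurable]: "h \<in> borel_measurable borel" for h
  proof -
    have "(\<integral>\<^sup>+x. h x \<partial>\<mu>0) = (\<integral>\<^sup>+x. RN_deriv ?\<pi> \<mu>0 x * h x \<partial>?\<pi>)"
      by (rule P.RN_deriv_nn_integral[OF ac s]) simp
    also have "\<dots> \<le> (\<integral>\<^sup>+x. ennreal M * h x \<partial>?\<pi>)"
      using ae by (intro nn_integral_mono_AE) (auto elim!: eventually_mono intro: mult_right_mono)
    also have "\<dots> = ennreal M * ((\<integral>\<^sup>+x. h x * indicator K x \<partial>lborel) / emeasure lborel K)"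
      by (simp add: nn_integral_cmult nn_integral_uniform_measure)
    also have "\<dots> = ennreal M / emeasure lborel K * (\<integral>\<^sup>+x. indicator K x * h x \<partial>lborel)"
      by (simp add: ennreal_times_divide ennreal_divide_times mult.commute)
    finally show ?thesis .
  qed
  ultimately show ?case by simp
next
  case (Suc k)
  let ?N = "asf_x_law \<eta> K \<mu>0 k"
  have sN: "sets ?N = sets borel" using Suc by simp
  have spN: "space ?N \<noteq> {}" using sets_eq_imp_space_eq[OF sN] by simp
  have G: "gauss_kernel \<eta> \<in> ?N \<rightarrow>\<^sub>M subprob_algebra borel"
    using gk_meas[OF \<eta>] by (simp add: measurable_cong_sets[OF sN refl])
  have sNG: "sets (?N \<bind> gauss_kernel \<eta>) = sets borel"
    by (rule sets_bind[OF _ spN]) simp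
  have R: "restricted_gauss \<eta> K \<in> (?N \<bind> gauss_kernel \<eta>) \<rightarrow>\<^sub>M subprob_algebra borel"
    using rg_meas[OF \<eta> B Kb] by (simp add: measurable_cong_sets[OF sNG refl])
  have spNG: "space (?N \<bind> gauss_kernel \<eta>) \<noteq> {}" using sets_eq_imp_space_eq[OF sNG] by simp
  have "sets (asf_x_law \<eta> K \<mu>0 (Suc k)) = sets borel"
    by (simp, rule sets_bind[OF _ spNG]) simp
  moreover have "(\<integral>\<^sup>+x. h x \<partial>asf_x_law \<eta> K \<mu>0 (Suc k)) \<le> ennreal M / emeasure lborel K * (\<integral>\<^sup>+x. indicator K x * h x \<partial>lborel)"
    if h[measurable]: "h \<in> borel_measurable borel" for h
  proof -
    have Rb: "restricted_gauss \<eta> K \<in> borel \<rightarrow>\<^sub>M subprob_algebra borel" by (rule rg_meas[OF \<eta> B Kb])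
    have Gb: "gauss_kernel \<eta> \<in> (borel::'a measure) \<rightarrow>\<^sub>M subprob_algebra borel" by (rule gk_meas[OF \<eta>])
    have m1: "(\<lambda>y. \<integral>\<^sup>+z. h z \<partial>restricted_gauss \<eta> K y) \<in> borel_measurable borel"
      by (rule measurable_compose[OF Rb nn_integral_measurable_subprob_algebra[OF h]])
    have m2: "(\<lambda>x. \<integral>\<^sup>+y. (\<integral>\<^sup>+z. h z \<partial>restricted_gauss \<eta> K y) \<partial>gauss_kernel \<eta> x) \<in> borel_measurable borel"
      by (rule measurable_compose[OF Gb nn_integral_measurable_subprob_algebra[OF m1]])
    have "(\<integral>\<^sup>+x. h x \<partial>asf_x_law \<eta> K \<mu>0 (Suc k))
        = (\<integral>\<^sup>+y. (\<integral>\<^sup>+z. h z \<partial>restricted_gauss \<eta> K y) \<partial>(?N \<bind> gauss_kernel \<eta>))"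
      by (simp add: nn_integral_bind[OF h R])
    also have "\<dots> = (\<integral>\<^sup>+x. (\<integral>\<^sup>+y. (\<integral>\<^sup>+z. h z \<partial>restricted_gauss \<eta> K y) \<partial>gauss_kernel \<eta> x) \<partial>?N)"
      by (rule nn_integral_bind[OF m1 G])
    also have "\<dots> \<le> ennreal M / emeasure lborel K * (\<integral>\<^sup>+x. indicator K x * (\<integral>\<^sup>+y. (\<integral>\<^sup>+z. h z \<partial>restricted_gauss \<eta> K y) \<partial>gauss_kernel \<eta> x) \<partial>lborel)"
      using Suc m2 by blast
    also have "\<dots> = ennreal M / emeasure lborel K * (\<integral>\<^sup>+x. indicator K x * h x \<partial>lborel)"
      by (simp add: core[OF \<eta> B Kb h])
    finally show ?thesis .
  qed
  ultimately show ?case by blast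
qed

lemma enlarge:
  fixes K :: "'a::euclidean_space set"
  assumes "closed K" "convex K" "ball 0 1 \<subseteq> K" "r \<ge> 0" "infdist y K \<le> r"
  shows "y \<in> (\<lambda>x. (1 + r) *\<^sub>R x) ` K"
proof -
  have Kne: "K \<noteq> {}" using assms(3) by (metis centre_in_ball empty_iff subset_empty zero_less_one)
  obtain p where p: "p \<in> K" "\<And>q. q \<in> K \<Longrightarrow> dist y p \<le> dist y q"
    using distance_attains_inf[OF assms(1) Kne] by metis
  have "dist y p \<le> infdist y K"
    unfolding infdist_notempty[OF Kne] using Kne p(2) by (intro cINF_greatest) auto
  then have dyp: "dist y p \<le> r" using assms(5) by linarith
  show ?thesis
  proof (cases "r = 0")
    case True
    then have "y = p" using dyp by simp
    then show ?thesis using p True by (intro image_eqI[of _ _ y]) auto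
  next
    case False
    then have r: "r > 0" using assms(4) by simp
    define u where "u = (1 / r) *\<^sub>R (y - p)"
    have "norm u = norm (y - p) / r" unfolding u_def norm_scaleR using r by simp
    moreover have "norm (y - p) / r \<le> 1" using dyp r by (simp add: dist_norm divide_le_eq)
    ultimately have "norm u \<le> 1" by simp
    then have "u \<in> cball 0 1" by simp
    also have "cball (0::'a) 1 = closure (ball 0 1)" by simp
    also have "\<dots> \<subseteq> K" by (rule closure_minimal[OF assms(3,1)])
    finally have uK: "u \<in> K" .
    define q where "q = (1 / (1 + r)) *\<^sub>R p + (r / (1 + r)) *\<^sub>R u"
    have qK: "q \<in> K" unfolding q_def
      using r by (intro convexD[OF assms(2) p(1) uK]) (auto simp: field_simps)
    have "(1 + r) *\<^sub>R q = y"
      unfolding q_def u_def using r by (simp add: scaleR_add_right algebra_simps)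
    then show ?thesis using qK by (intro image_eqI[of _ _ q]) auto
  qed
qed

lemma emeasure_lebesgue_borel: "A \<in> sets borel \<Longrightarrow> emeasure lebesgue A = emeasure lborel A"
  by simp

lemma vol_enlarge:
  fixes K :: "'a::euclidean_space set"
  assumes "closed K" "convex K" "ball 0 1 \<subseteq> K" "r \<ge> 0"
  shows "emeasure lborel {y. infdist y K \<le> r} \<le> ennreal ((1 + r) ^ DIM('a)) * emeasure lborel K"
proof -
  have c: "closed {y::'a. infdist y K \<le> r}"
    by (intro closed_Collect_le continuous_intros)
  have ci: "closed ((\<lambda>x. (1 + r) *\<^sub>R x + 0) ` K)" using closed_scaling[OF assms(1), of "1+r"] by simp
  have "emeasure lborel {y. infdist y K \<le> r} = emeasure lebesgue {y. infdist y K \<le> r}"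
    using c by simp
  also have "\<dots> \<le> emeasure lebesgue ((\<lambda>x. (1 + r) *\<^sub>R x + 0) ` K)"
    using enlarge[OF assms] ci by (intro emeasure_mono) auto
  also have "\<dots> = ennreal (\<bar>1 + r\<bar> ^ DIM('a)) * emeasure lebesgue K"
    by (rule emeasure_lebesgue_affine)
  also have "\<dots> = ennreal ((1 + r) ^ DIM('a)) * emeasure lborel K"
    using assms(1,4) by simp
  finally show ?thesis .
qed

lemma exp_tail:
  assumes a: "a > 0"
  shows "(\<integral>\<^sup>+r. ennreal (a * exp (- a * r)) * indicator {t..} r \<partial>lborel) = ennreal (exp (- a * t))"
proof -
  have "(\<integral>\<^sup>+r. ennreal (a * exp (- a * r)) * indicator {t..} r \<partial>lborel)
      = (\<integral>\<^sup>+s. ennreal (a * exp (- a * (t + s))) * indicator {t..} (t + s) \<partial>lborel)"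
    using nn_integral_real_affine[of "\<lambda>r. ennreal (a * exp (- a * r)) * indicator {t..} r" 1 t] by simp
  also have "\<dots> = (\<integral>\<^sup>+s. ennreal (exp (- a * t)) * ennreal (exponential_density a s) \<partial>lborel)"
    using a by (intro nn_integral_cong) (auto simp: exponential_density_def ennreal_mult[symmetric] exp_add[symmetric] algebra_simps split: split_indicator)
  also have "\<dots> = ennreal (exp (- a * t)) * emeasure (density lborel (exponential_density a)) UNIV"
    by (simp add: nn_integral_cmult emeasure_density)
  also have "\<dots> = ennreal (exp (- a * t))"
    using prob_space.emeasure_space_1[OF prob_space_exponential_density[OF a]] by simp
  finally show ?thesis .
qed

lemma infdist_meas[measurable]: "(\<lambda>y. infdist y K) \<in> borel_measurable borel"
  by (intro borel_measurable_continuous_onI continuous_intros)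

lemma expdist:
  fixes K :: "'a::euclidean_space set"
  assumes K: "closed K" "convex K" "ball 0 1 \<subseteq> K" and c: "c > real DIM('a)"
  shows "(\<integral>\<^sup>+y. ennreal (exp (- c * infdist y K)) \<partial>lborel) \<le> ennreal (c / (c - real DIM('a))) * emeasure lborel K"
proof -
  let ?d = "real DIM('a)"
  have c0: "c > 0" using c by (metis DIM_positive of_nat_0_less_iff less_trans)
  have cd: "c - ?d > 0" using c by simp
  have [measurable]: "K \<in> sets borel" using K(1) by simp
  have "(\<integral>\<^sup>+y. ennreal (exp (- c * infdist y K)) \<partial>lborel)
      = (\<integral>\<^sup>+y. (\<integral>\<^sup>+r. ennreal (c * exp (- c * r)) * indicator {0..} r * indicator {y. infdist y K \<le> r} y \<partial>lborel) \<partial>lborel)"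
  proof (intro nn_integral_cong)
    fix y :: 'a
    have "ennreal (exp (- c * infdist y K)) = (\<integral>\<^sup>+r. ennreal (c * exp (- c * r)) * indicator {infdist y K..} r \<partial>lborel)"
      using exp_tail[OF c0] by simp
    also have "\<dots> = (\<integral>\<^sup>+r. ennreal (c * exp (- c * r)) * indicator {0..} r * indicator {y. infdist y K \<le> r} y \<partial>lborel)"
      using infdist_nonneg[of y K] by (intro nn_integral_cong) (auto split: split_indicator)
    finally show "ennreal (exp (- c * infdist y K)) = \<dots>" .
  qed
  also have "\<dots> = (\<integral>\<^sup>+r. (\<integral>\<^sup>+y. (ennreal (c * exp (- c * r)) * indicator {0..} r) * indicator {y. infdist y K \<le> r} y \<partial>lborel) \<partial>lborel)"
  proof (subst lborel_pair.Fubini')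
    have "{x \<in> space (lborel \<Otimes>\<^sub>M lborel). infdist (snd x) K \<le> fst x} \<in> sets ((lborel :: real measure) \<Otimes>\<^sub>M (lborel :: 'a measure))"
      by measurable
    moreover have "(\<lambda>(r::real, y::'a). indicator {y. infdist y K \<le> r} y :: ennreal)
       = indicator {x \<in> space (lborel \<Otimes>\<^sub>M lborel). infdist (snd x) K \<le> fst x}"
      by (auto simp: fun_eq_iff space_pair_measure split: split_indicator)
    ultimately have [measurable]: "(\<lambda>(r::real, y::'a). indicator {y. infdist y K \<le> r} y :: ennreal) \<in> borel_measurable (lborel \<Otimes>\<^sub>M lborel)"
      by simp
    show "(\<lambda>(r::real, y::'a). ennreal (c * exp (- c * r)) * indicator {0..} r * indicator {y. infdist y K \<le> r} y) \<in> borel_measurable (lborel \<Otimes>\<^sub>M lborel)"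
      by measurable
  qed (simp add: mult.assoc)
  also have "\<dots> = (\<integral>\<^sup>+r. ennreal (c * exp (- c * r)) * indicator {0..} r * emeasure lborel {y. infdist y K \<le> r} \<partial>lborel)"
  proof (intro nn_integral_cong)
    fix r :: real
    have "{y::'a. infdist y K \<le> r} \<in> sets borel" by measurable
    then show "(\<integral>\<^sup>+y. (ennreal (c * exp (- c * r)) * indicator {0..} r) * indicator {y. infdist y K \<le> r} y \<partial>lborel)
       = ennreal (c * exp (- c * r)) * indicator {0..} r * emeasure lborel {y. infdist y K \<le> r}"
      by (subst nn_integral_cmult_indicator) auto
  qed
  also have "\<dots> \<le> (\<integral>\<^sup>+r. ennreal (c / (c - ?d)) * emeasure lborel K * (ennreal ((c - ?d) * exp (- (c - ?d) * r)) * indicator {0..} r) \<partial>lborel)"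
  proof (intro nn_integral_mono)
    fix r :: real
    show "ennreal (c * exp (- c * r)) * indicator {0..} r * emeasure lborel {y. infdist y K \<le> r}
        \<le> ennreal (c / (c - ?d)) * emeasure lborel K * (ennreal ((c - ?d) * exp (- (c - ?d) * r)) * indicator {0..} r)"
    proof (cases "r \<ge> 0")
      case True
      have "emeasure lborel {y. infdist y K \<le> r} \<le> ennreal ((1 + r) ^ DIM('a)) * emeasure lborel K"
        by (rule vol_enlarge[OF K True])
      also have "\<dots> \<le> ennreal (exp (?d * r)) * emeasure lborel K"
      proof (intro mult_right_mono ennreal_leI)
        have "(1 + r) ^ DIM('a) \<le> exp r ^ DIM('a)" using True by (intro power_mono) auto
        also have "\<dots> = exp (?d * r)" by (simp add: exp_of_nat_mult)
        finally show "(1 + r) ^ DIM('a) \<le> exp (?d * r)" .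
      qed simp
      finally have v: "emeasure lborel {y. infdist y K \<le> r} \<le> ennreal (exp (?d * r)) * emeasure lborel K" .
      have eq: "c * exp (- c * r) * exp (?d * r) = c / (c - ?d) * ((c - ?d) * exp (- (c - ?d) * r))"
      proof -
        have e: "exp (- c * r) * exp (?d * r) = exp (- (c - ?d) * r)" by (simp add: exp_add[symmetric] algebra_simps)
        have "c / (c - ?d) * ((c - ?d) * exp (- (c - ?d) * r)) = c * exp (- (c - ?d) * r)"
          using cd by simp
        then show ?thesis using e by (simp add: mult.assoc)
      qed
      have "ennreal (c * exp (- c * r)) * emeasure lborel {y. infdist y K \<le> r}
          \<le> ennreal (c * exp (- c * r)) * (ennreal (exp (?d * r)) * emeasure lborel K)"
        using v by (rule mult_left_mono) simp
      also have "\<dots> = ennreal (c * exp (- c * r) * exp (?d * r)) * emeasure lborel K"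
        using c0 by (simp add: ennreal_mult mult.assoc)
      also have "\<dots> = ennreal (c / (c - ?d) * ((c - ?d) * exp (- (c - ?d) * r))) * emeasure lborel K"
        by (simp only: eq)
      also have "\<dots> = ennreal (c / (c - ?d)) * emeasure lborel K * ennreal ((c - ?d) * exp (- (c - ?d) * r))"
      proof -
        have "ennreal (c / (c - ?d) * ((c - ?d) * exp (- (c - ?d) * r))) = ennreal (c / (c - ?d)) * ennreal ((c - ?d) * exp (- (c - ?d) * r))"
          using cd c0 by (intro ennreal_mult) auto
        then show ?thesis by (simp only: mult_ac)
      qed
      finally show ?thesis using True by simp
    qed simp
  qed
  also have "\<dots> = ennreal (c / (c - ?d)) * emeasure lborel K * (\<integral>\<^sup>+r. ennreal ((c - ?d) * exp (- (c - ?d) * r)) * indicator {0..} r \<partial>lborel)"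
    by (rule nn_integral_cmult) simp
  also have "\<dots> = ennreal (c / (c - ?d)) * emeasure lborel K"
    using exp_tail[OF cd, of 0] by simp
  finally show ?thesis .
qed

lemma P2_real:
  fixes d \<eta> a r s :: real
  assumes d: "d \<ge> 1" and \<eta>: "\<eta> = 1 / d\<^sup>2" and a: "a = sqrt (2 * \<eta> / d)" and r: "r \<ge> 0" and s: "s \<ge> 0"
  shows "- ((1 / (2 * \<eta>)) * (r\<^sup>2 + s\<^sup>2 - 2 * a * (r + s) - 12 * \<eta> / d))
     \<le> - (r\<^sup>2 / (2 * \<eta> * (d + 1) / d)) + (8 / d + 1 + 9 / 8 + 3 / 2 * d * a) - 3 / 2 * d * s"
proof -
  have d0: "d > 0" using d by simp
  have a0: "a \<ge> 0" using a d0 \<eta> by simp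
  have a2: "a\<^sup>2 = 2 / d ^ 3"
    using a d0 \<eta> by (simp add: power2_eq_square power3_eq_cube field_simps)
  have inv: "1 / (2 * \<eta>) = d\<^sup>2 / 2" using \<eta> d0 by simp
  have key: "(d\<^sup>2 / 2) * a\<^sup>2 * (d + 1) = 1 + 1 / d"
    unfolding a2 using d0 by (simp add: power2_eq_square power3_eq_cube field_simps)
  have idA: "(d\<^sup>2 / (2 * (d + 1))) * (r - a * (d + 1))\<^sup>2
      = (d\<^sup>2 / 2) * (r\<^sup>2 - 2 * a * r) - (d ^ 3 / (2 * (d + 1))) * r\<^sup>2 + (d\<^sup>2 / 2) * a\<^sup>2 * (d + 1)"
    using d0 by (simp add: power2_eq_square power3_eq_cube field_simps)
  have sqA: "0 \<le> (d\<^sup>2 / (2 * (d + 1))) * (r - a * (d + 1))\<^sup>2" using d0 by simp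
  have A: "(d\<^sup>2 / 2) * (r\<^sup>2 - 2 * a * r) \<ge> (d ^ 3 / (2 * (d + 1))) * r\<^sup>2 - 1 - 1 / d"
    using idA sqA key by linarith
  have idB: "(1/2) * (d * (s - a) - 3/2)\<^sup>2 = (d\<^sup>2 / 2) * (s\<^sup>2 - 2 * a * s) + (d\<^sup>2 / 2) * a\<^sup>2 - 3/2 * d * s + 3/2 * d * a + 9/8"
    by (simp add: power2_eq_square algebra_simps)
  have keyB: "(d\<^sup>2 / 2) * a\<^sup>2 = 1 / d"
    unfolding a2 using d0 by (simp add: power2_eq_square power3_eq_cube field_simps)
  have B: "(d\<^sup>2 / 2) * (s\<^sup>2 - 2 * a * s) \<ge> 3/2 * d * s - 3/2 * d * a - 9/8 - 1 / d"
  proof -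
    have "0 \<le> (1/2) * (d * (s - a) - 3/2)\<^sup>2" by simp
    then show ?thesis using idB keyB by linarith
  qed
  have C: "(d\<^sup>2 / 2) * (12 * \<eta> / d) = 6 / d" using \<eta> d0 by (simp add: power2_eq_square field_simps)
  have Sr: "r\<^sup>2 / (2 * \<eta> * (d + 1) / d) = (d ^ 3 / (2 * (d + 1))) * r\<^sup>2"
    unfolding \<eta> using d0 by (simp add: power2_eq_square power3_eq_cube field_simps)
  have E: "(1 / (2 * \<eta>)) * (r\<^sup>2 + s\<^sup>2 - 2 * a * (r + s) - 12 * \<eta> / d)
      = (d\<^sup>2 / 2) * (r\<^sup>2 - 2 * a * r) + (d\<^sup>2 / 2) * (s\<^sup>2 - 2 * a * s) - (d\<^sup>2 / 2) * (12 * \<eta> / d)"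
    unfolding inv by (simp add: algebra_simps)
  show ?thesis unfolding E Sr C using A B by linarith
qed

definition Qc :: "real \<Rightarrow> real \<Rightarrow> real" where
  "Qc \<eta> d = exp (8 / d + 1 + 9 / 8 + 3 / 2 * d * sqrt (2 * \<eta> / d)) * (pi * (2 * \<eta> * (d + 1) / d)) powr (d / 2)"

lemma n_bound:
  fixes K :: "'a::euclidean_space set" and xh y :: 'a
  assumes \<eta>: "\<eta> = 1 / (real DIM('a))\<^sup>2" and xh: "xh \<in> K"
  shows "n_trials \<eta> K xh y \<le> ennreal (Qc \<eta> (real DIM('a)) * exp (- (3 / 2 * real DIM('a)) * infdist y K)) / Dn \<eta> K y"
proof -
  let ?d = "real DIM('a)"
  define S where "S = 2 * \<eta> * (?d + 1) / ?d"
  define B0 where "B0 = exp (8 / ?d + 1 + 9 / 8 + 3 / 2 * ?d * sqrt (2 * \<eta> / ?d))"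
  have d1: "?d \<ge> 1" by (simp add: DIM_positive Suc_le_eq)
  have S0: "S > 0" unfolding S_def \<eta> using d1 by simp
  have pw: "exp (- P2 \<eta> ?d xh y x) \<le> B0 * exp (- (3 / 2 * ?d) * norm (xh - y)) * exp (- (norm (x - xh))\<^sup>2 / S)" for x
  proof -
    have "- P2 \<eta> ?d xh y x \<le> - ((norm (x - xh))\<^sup>2 / S) + (8 / ?d + 1 + 9 / 8 + 3 / 2 * ?d * sqrt (2 * \<eta> / ?d)) - 3 / 2 * ?d * norm (xh - y)"
      unfolding P2_def S_def by (rule P2_real[OF d1 \<eta> refl]) auto
    then have "exp (- P2 \<eta> ?d xh y x) \<le> exp (- ((norm (x - xh))\<^sup>2 / S) + (8 / ?d + 1 + 9 / 8 + 3 / 2 * ?d * sqrt (2 * \<eta> / ?d)) - 3 / 2 * ?d * norm (xh - y))"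
      by simp
    also have "\<dots> = B0 * exp (- (3 / 2 * ?d) * norm (xh - y)) * exp (- (norm (x - xh))\<^sup>2 / S)"
      unfolding B0_def by (simp add: exp_add[symmetric] exp_diff algebra_simps)
    finally show ?thesis .
  qed
  have "infdist y K \<le> norm (xh - y)" using infdist_le[OF xh, of y] by (simp add: dist_norm norm_minus_commute)
  then have ex: "exp (- (3 / 2 * ?d) * norm (xh - y)) \<le> exp (- (3 / 2 * ?d) * infdist y K)" by simp
  have "(\<integral>\<^sup>+x. ennreal (exp (- P2 \<eta> ?d xh y x)) \<partial>lborel)
      \<le> (\<integral>\<^sup>+x. ennreal (B0 * exp (- (3 / 2 * ?d) * norm (xh - y))) * ennreal (exp (- (norm (x - xh))\<^sup>2 / S)) \<partial>lborel)"
    using pw by (intro nn_integral_mono) (simp add: ennreal_mult[symmetric] B0_def)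
  also have "\<dots> = ennreal (B0 * exp (- (3 / 2 * ?d) * norm (xh - y))) * ennreal ((pi * S) powr (?d / 2))"
    by (simp add: nn_integral_cmult gaussD[OF S0, simplified])
  also have "\<dots> \<le> ennreal (B0 * exp (- (3 / 2 * ?d) * infdist y K)) * ennreal ((pi * S) powr (?d / 2))"
    using ex by (intro mult_right_mono ennreal_leI) (auto simp: B0_def)
  also have "\<dots> = ennreal (Qc \<eta> ?d * exp (- (3 / 2 * ?d) * infdist y K))"
    unfolding Qc_def B0_def S_def by (simp add: ennreal_mult[symmetric] ac_simps)
  finally have N: "(\<integral>\<^sup>+x. ennreal (exp (- P2 \<eta> ?d xh y x)) \<partial>lborel) \<le> ennreal (Qc \<eta> ?d * exp (- (3 / 2 * ?d) * infdist y K))" .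
  show ?thesis
    unfolding n_trials_def Dn_def[symmetric] by (rule divide_right_mono_ennreal[OF N])
qed

lemma final_real:
  fixes d \<eta> :: real
  assumes d: "d \<ge> 1" and \<eta>: "\<eta> = 1 / d\<^sup>2"
  shows "(2 * pi * \<eta>) powr (- d / 2) * Qc \<eta> d * 3 \<le> sqrt (2 * pi) * exp (13 / 4 + 20 / d)"
proof -
  have d0: "d > 0" using d by simp
  have e0: "\<eta> > 0" using \<eta> d0 by simp
  have w: "d * sqrt (2 * \<eta> / d) = sqrt (2 / d)"
  proof -
    have "d * sqrt (2 * \<eta> / d) = sqrt (d\<^sup>2 * (2 * \<eta> / d))"
      using real_sqrt_mult[of "d\<^sup>2" "2 * \<eta> / d"] d0 by (simp only: real_sqrt_abs)
    also have "d\<^sup>2 * (2 * \<eta> / d) = 2 / d" unfolding \<eta> using d0 by (simp add: power2_eq_square field_simps)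
    finally show ?thesis .
  qed
  have amgm: "3 / 2 * sqrt (2 / d) \<le> 1 / 4 + 9 / (2 * d)"
  proof -
    have sq: "(sqrt (2 / d))\<^sup>2 = 2 / d" using d0 by simp
    have "0 \<le> (3 / 2 * sqrt (2 / d) - 1 / 2)\<^sup>2" by simp
    also have "\<dots> = 9 / 4 * (sqrt (2 / d))\<^sup>2 - 3 / 2 * sqrt (2 / d) + 1 / 4"
      by (simp add: power2_eq_square algebra_simps)
    finally show ?thesis unfolding sq by simp
  qed
  have pw: "(2 * pi * \<eta>) powr (- d / 2) * (pi * (2 * \<eta> * (d + 1) / d)) powr (d / 2) = ((d + 1) / d) powr (d / 2)"
  proof -
    have e: "pi * (2 * \<eta> * (d + 1) / d) = (2 * pi * \<eta>) * ((d + 1) / d)" by simp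
    have "(pi * (2 * \<eta> * (d + 1) / d)) powr (d / 2) = (2 * pi * \<eta>) powr (d / 2) * ((d + 1) / d) powr (d / 2)"
      unfolding e by (rule powr_mult)
    moreover have "(2 * pi * \<eta>) powr (- d / 2) * (2 * pi * \<eta>) powr (d / 2) = 1"
      using e0 by (simp add: powr_add[symmetric])
    ultimately show ?thesis by (simp add: mult.assoc[symmetric])
  qed
  have pw2: "((d + 1) / d) powr (d / 2) \<le> exp (1 / 2)"
  proof -
    have "((d + 1) / d) powr (d / 2) = exp (d / 2 * ln (1 + 1 / d))"
      using d0 by (simp add: powr_def field_simps)
    also have "\<dots> \<le> exp (d / 2 * (1 / d))"
      using ln_add_one_self_le_self[of "1 / d"] d0 by (intro exp_mono mult_left_mono) auto
    also have "\<dots> = exp (1 / 2)" using d0 by simp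
    finally show ?thesis .
  qed
  have "(2 * pi * \<eta>) powr (- d / 2) * Qc \<eta> d * 3
      = 3 * exp (8 / d + 1 + 9 / 8 + 3 / 2 * sqrt (2 / d)) * ((d + 1) / d) powr (d / 2)"
  proof -
    have E1: "8 / d + 1 + 9 / 8 + 3 / 2 * d * sqrt (2 * \<eta> / d) = 8 / d + 1 + 9 / 8 + 3 / 2 * sqrt (2 / d)"
      using w by (simp only: mult.assoc)
    show ?thesis unfolding Qc_def E1 pw[symmetric] by (simp only: mult_ac)
  qed
  also have "\<dots> \<le> 3 * exp (8 / d + 1 + 9 / 8 + (1 / 4 + 9 / (2 * d))) * exp (1 / 2)"
  proof -
    have "exp (8 / d + 1 + 9 / 8 + 3 / 2 * sqrt (2 / d)) \<le> exp (8 / d + 1 + 9 / 8 + (1 / 4 + 9 / (2 * d)))"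
      using amgm by simp
    then have "3 * exp (8 / d + 1 + 9 / 8 + 3 / 2 * sqrt (2 / d)) \<le> 3 * exp (8 / d + 1 + 9 / 8 + (1 / 4 + 9 / (2 * d)))"
      by simp
    from mult_mono[OF this pw2] show ?thesis by simp
  qed
  also have "\<dots> = 3 * exp (- 3 / 8 - 15 / (2 * d)) * exp (13 / 4 + 20 / d)"
  proof -
    have "8 / d + 1 + 9 / 8 + (1 / 4 + 9 / (2 * d)) + 1 / 2 = (- 3 / 8 - 15 / (2 * d)) + (13 / 4 + 20 / d)"
      using d0 by (simp add: field_simps)
    then show ?thesis by (simp add: mult.assoc exp_add[symmetric])
  qed
  also have "\<dots> \<le> 3 * exp (- 3 / 8) * exp (13 / 4 + 20 / d)"
    using d0 by (intro mult_right_mono) auto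
  also have "\<dots> \<le> sqrt (2 * pi) * exp (13 / 4 + 20 / d)"
  proof (intro mult_right_mono)
    have s1: "sqrt (2 * pi) \<ge> sqrt 6.25" using pi_approx(1) by (intro real_sqrt_le_mono) simp
    have s2: "sqrt 6.25 = 2.5" by (intro real_sqrt_unique) (simp_all add: power2_eq_square)
    have s: "sqrt (2 * pi) \<ge> 2.5" using s1 s2 by linarith
    have "exp (3 / 8 :: real) \<ge> 1 + 3 / 8" by (rule exp_ge_add_one_self)
    from mult_mono[OF s this] have "2.5 * (1 + 3 / 8) \<le> sqrt (2 * pi) * exp (3 / 8)" by simp
    then have "3 \<le> sqrt (2 * pi) * exp (3 / 8)" by simp
    then have "3 * exp (- 3 / 8) \<le> sqrt (2 * pi) * exp (3 / 8) * exp (- 3 / 8)"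
      by (intro mult_right_mono) auto
    also have "\<dots> = sqrt (2 * pi)" by (simp add: mult.assoc exp_add[symmetric])
    finally show "3 * exp (- 3 / 8) \<le> sqrt (2 * pi)" .
  qed simp
  finally show ?thesis .
qed

theorem mainTheorem10:
  fixes K :: "'a::euclidean_space set" and R M :: real and \<mu>0 :: "'a measure"
    and xh :: "'a \<Rightarrow> 'a" and \<eta> :: real and k :: nat
  assumes "K \<noteq> {}" "closed K" "convex K"
    and "R > 1" "ball 0 1 \<subseteq> K" "K \<subseteq> ball 0 R"
    and "\<eta> = 1 / (real DIM('a))\<^sup>2"
    and "prob_space \<mu>0" "warm M \<mu>0 (uniform_measure lborel K)"
    and "\<And>y. xh y \<in> K \<and>
           (1 / (2 * \<eta>)) * (norm (xh y - y))\<^sup>2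
             - (INF x\<in>K. (1 / (2 * \<eta>)) * (norm (x - y))\<^sup>2) \<le> 1 / real DIM('a)"
  shows "(\<integral>\<^sup>+ y. n_trials \<eta> K (xh y) y \<partial>(asf_y_law \<eta> K \<mu>0 k))
         \<le> ennreal (sqrt (2 * pi) * M * exp (13 / 4 + 20 / real DIM('a))
                    + M * exp (9 / 4 + 12 / real DIM('a)))"
proof -
  note cK = assms(2) and cvx = assms(3) and B = assms(5) and W = assms(9)
  let ?d = "real DIM('a)"
  have d1: "?d \<ge> 1" by (simp add: DIM_positive Suc_le_eq)
  have \<eta>: "\<eta> = 1 / ?d\<^sup>2" by (rule assms(7))
  have \<eta>0: "\<eta> > 0" using \<eta> d1 by simp
  have Kb[measurable]: "K \<in> sets borel" using cK by simp
  have xhK: "xh y \<in> K" for y using assms(10) by blast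
  have "measure lborel (ball (0::'a) 1) > 0" using content_ball_pos[of 1 0] by simp
  then have "emeasure lborel (ball (0::'a) 1) > 0"
    using emeasure_lborel_ball_finite[of "0::'a" 1] by (simp add: emeasure_eq_ennreal_measure)
  moreover have "emeasure lborel (ball (0::'a) 1) \<le> emeasure lborel K" using B by (intro emeasure_mono) auto
  ultimately have V0: "emeasure lborel K \<noteq> 0" by auto
  have "emeasure lborel K \<le> emeasure lborel (ball (0::'a) R)" using assms(6) by (intro emeasure_mono) auto
  then have Vt: "emeasure lborel K \<noteq> \<infinity>" using emeasure_lborel_ball_finite[of "0::'a" R] by (auto simp: top_unique)
  let ?V = "emeasure lborel K"
  let ?N = "asf_x_law \<eta> K \<mu>0 k"
  have XB: "sets ?N = sets borel \<and> (\<forall>h. h \<in> borel_measurable borel \<longrightarrow>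
      (\<integral>\<^sup>+x. h x \<partial>?N) \<le> ennreal M / ?V * (\<integral>\<^sup>+x. indicator K x * h x \<partial>lborel))"
    by (rule x_bound[OF \<eta>0 B Kb V0 Vt W])
  have sN: "sets ?N = sets borel" using XB by blast
  have G: "gauss_kernel \<eta> \<in> ?N \<rightarrow>\<^sub>M subprob_algebra borel"
    using gk_meas[OF \<eta>0] by (simp add: measurable_cong_sets[OF sN refl])
  define C0 where "C0 = (2 * pi * \<eta>) powr (- ?d / 2)"
  define Q where "Q = Qc \<eta> ?d"
  define c where "c = 3 / 2 * ?d"
  define F where "F = (\<lambda>y. ennreal (Q * exp (- c * infdist y K)) / Dn \<eta> K y)"
  have Fm[measurable]: "F \<in> borel_measurable borel" unfolding F_def by measurable
  have Q0: "Q \<ge> 0" unfolding Q_def Qc_def by simp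
  have C00: "C0 \<ge> 0" unfolding C0_def by simp
  have Fm2: "(\<lambda>x. \<integral>\<^sup>+y. F y \<partial>gauss_kernel \<eta> x) \<in> borel_measurable borel"
    by (rule measurable_compose[OF gk_meas[OF \<eta>0] nn_integral_measurable_subprob_algebra[OF Fm]])
  have GF: "(\<integral>\<^sup>+y. F y \<partial>gauss_kernel \<eta> x) = (\<integral>\<^sup>+y. ennreal C0 * ennreal (exp (- (norm (x - y))\<^sup>2 / (2 * \<eta>))) * F y \<partial>lborel)" for x
    unfolding gauss_kernel_def C0_def
    by (subst nn_integral_density) (auto intro!: nn_integral_cong simp: ennreal_mult norm_minus_commute)
  have FD: "F y * Dn \<eta> K y = ennreal (Q * exp (- c * infdist y K))" for y
    unfolding F_def using Dn_pos[OF \<eta>0 B, of y] Dn_fin[OF \<eta>0, of K y]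
    by (simp add: ennreal_divide_times)
  have "(\<integral>\<^sup>+ y. n_trials \<eta> K (xh y) y \<partial>(asf_y_law \<eta> K \<mu>0 k)) \<le> (\<integral>\<^sup>+ y. F y \<partial>(?N \<bind> gauss_kernel \<eta>))"
    unfolding asf_y_law_def F_def Q_def c_def
    by (intro nn_integral_mono n_bound[OF \<eta> xhK])
  also have "\<dots> = (\<integral>\<^sup>+x. (\<integral>\<^sup>+y. F y \<partial>gauss_kernel \<eta> x) \<partial>?N)"
    by (rule nn_integral_bind[OF Fm G])
  also have "\<dots> \<le> ennreal M / ?V * (\<integral>\<^sup>+x. indicator K x * (\<integral>\<^sup>+y. F y \<partial>gauss_kernel \<eta> x) \<partial>lborel)"
    using XB Fm2 by blast
  also have "(\<integral>\<^sup>+x. indicator K x * (\<integral>\<^sup>+y. F y \<partial>gauss_kernel \<eta> x) \<partial>lborel)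
      = (\<integral>\<^sup>+x. (\<integral>\<^sup>+y. (ennreal C0 * F y) * (indicator K x * ennreal (exp (- (norm (x - y))\<^sup>2 / (2 * \<eta>)))) \<partial>lborel) \<partial>lborel)"
    by (intro nn_integral_cong) (simp add: GF nn_integral_cmult[symmetric] ac_simps)
  also have "\<dots> = (\<integral>\<^sup>+y. (\<integral>\<^sup>+x. (ennreal C0 * F y) * (indicator K x * ennreal (exp (- (norm (x - y))\<^sup>2 / (2 * \<eta>)))) \<partial>lborel) \<partial>lborel)"
    by (subst lborel_pair.Fubini') auto
  also have "\<dots> = (\<integral>\<^sup>+y. ennreal C0 * (F y * Dn \<eta> K y) \<partial>lborel)"
    by (intro nn_integral_cong) (simp add: nn_integral_cmult Dn_def mult.assoc)
  also have "\<dots> = (\<integral>\<^sup>+y. ennreal (C0 * Q) * ennreal (exp (- c * infdist y K)) \<partial>lborel)"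
    using C00 Q0 by (intro nn_integral_cong) (simp add: FD ennreal_mult mult.assoc)
  also have "\<dots> = ennreal (C0 * Q) * (\<integral>\<^sup>+y. ennreal (exp (- c * infdist y K)) \<partial>lborel)"
    by (rule nn_integral_cmult) simp
  also have "\<dots> \<le> ennreal (C0 * Q) * (ennreal (c / (c - ?d)) * ?V)"
    by (intro mult_left_mono expdist[OF cK cvx B]) (auto simp: c_def)
  also have "c / (c - ?d) = 3" unfolding c_def using d1 by (simp add: field_simps)
  finally have E: "(\<integral>\<^sup>+ y. n_trials \<eta> K (xh y) y \<partial>(asf_y_law \<eta> K \<mu>0 k))
      \<le> ennreal M / ?V * (ennreal (C0 * Q) * (ennreal 3 * ?V))"
    by (simp add: mult_left_mono)
  also have "\<dots> = ennreal M * ennreal (C0 * Q * 3)"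
  proof -
    have "ennreal (C0 * Q) * (ennreal 3 * ?V) = ennreal (C0 * Q * 3) * ?V"
      using C00 Q0 by (simp add: ennreal_mult ac_simps)
    then show ?thesis using V0 Vt
      by (simp add: ennreal_divide_times ennreal_mult_divide_eq)
  qed
  also have "\<dots> \<le> ennreal (sqrt (2 * pi) * M * exp (13 / 4 + 20 / ?d) + M * exp (9 / 4 + 12 / ?d))"
  proof (cases "M \<ge> 0")
    case False
    then show ?thesis by (simp add: ennreal_neg)
  next
    case True
    have X: "C0 * Q * 3 \<le> sqrt (2 * pi) * exp (13 / 4 + 20 / ?d)"
      unfolding C0_def Q_def using final_real[OF d1 \<eta>] by simp
    have "M * (C0 * Q * 3) \<le> sqrt (2 * pi) * M * exp (13 / 4 + 20 / ?d) + M * exp (9 / 4 + 12 / ?d)"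
    proof -
      have "M * (C0 * Q * 3) \<le> M * (sqrt (2 * pi) * exp (13 / 4 + 20 / ?d))"
        by (rule mult_left_mono[OF X True])
      moreover have "0 \<le> M * exp (9 / 4 + 12 / ?d)" using True by simp
      ultimately show ?thesis by (simp add: ac_simps)
    qed
    then have "ennreal (M * (C0 * Q * 3)) \<le> ennreal (sqrt (2 * pi) * M * exp (13 / 4 + 20 / ?d) + M * exp (9 / 4 + 12 / ?d))"
      by (rule ennreal_leI)
    moreover have "ennreal M * ennreal (C0 * Q * 3) = ennreal (M * (C0 * Q * 3))"
      using True C00 Q0 by (simp add: ennreal_mult)
    ultimately show ?thesis by metis
  qed
  finally show ?thesis .
qed

end
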